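(* Let $(x_n)$ be a block sequence in $W$, $X=[x_n]$, $\beta<\omega_1$, and suppose that for every normalised block sequence $(y_n)$ in $X$ and every $K\ge1$, I has a strategy in $F^\beta_X$ to play $(z_0,\dots,z_k)$ such that $(z_0,\dots,z_k)\not\sim_K(y_0,\dots,y_k)$. Then for every normalised block sequence $(y_n)$ in $X$ and every $K\ge1$ there is a sequence $(J_m)_{m\in\mathbb N}$ of finite intervals of $\mathbb N$ with $\min J_m\to\infty$ such that whenever $A\subseteq\mathbb N$ is infinite and contains $0$ and $Z=[x_j: j\notin\bigcup_{m\in A}J_m]$, we have ${\rm rank}\big(T((y_n),Z,K)\big)\le\beta$.
   Context: Let $\mathcal W$ be a real Banach space with Schauder basis $(e_n)$. Fix a countable subfield $\mathfrak F\subseteq\mathbb R$ such that $\|\sum_{n\le m}a_ne_n\|\in\mathfrak F$ whenever all $a_n\in\mathfrak F$, and let $W$ be the $\mathfrak F$-vector space of finite $\mathfrak F$-linear combinations of the $e_n$, with the norm of $\mathcal W$; subspaces and spans $[\cdot]$ are $\mathfrak F$-linear in $W$. For nonzero $x=\sum a_ne_n$, ${\rm supp}(x)=\{n:a_n\neq0\}$, and $x<y$ means $\max{\rm supp}(x)<\min{\rm supp}(y)$. A block sequence is a sequence of nonzero vectors $x_0<x_1<\dots$ (normalised if all have norm $1$); a block subspace is the span of an infinite block sequence; a block sequence in $X$ means one whose terms lie in $X$. $[e_i]_{i>n}$ is the span of $\{e_i:i>n\}$. $(x_i)_{i\le k}\sim_K(y_i)_{i\le k}$ means $\frac1K\|\sum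 a_ix_i\|\le\|\sum a_iy_i\|\le K\|\sum a_ix_i\|$ for all real $a_i$. $T((y_n),Z,K)$ is the tree of all finite sequences $(v_0,\dots,v_k)$ of vectors of $Z$, including the empty one, with $(v_0,\dots,v_k)\sim_K(y_0,\dots,y_k)$. For a well-founded tree $T$, $\rho_T(s)=\sup\{\rho_T(t)+1:s\prec t\in T\}$ ($0$ at terminal nodes) and ${\rm rank}(T)=\sup\{\rho_T(s)+1:s\in T\}$; ill-founded trees have rank $\infty>\gamma$ for all ordinals $\gamma$. Game $F^\beta_X$: in rounds $l=0,1,\dots$, I plays an integer $n_l$ and an ordinal $\xi_l$ with $\xi_0<\beta$ and $\xi_l<\xi_{l-1}$ for $l\ge1$; II plays a finite-dimensional $F_l\subseteq X\cap[e_i]_{i>n_l}$ and a nonzero $z_l\in F_0+\dots+F_l$; the game ends after II's response in the round $k$ with $\xi_k=0$ (immediately with empty outcome if $\beta=0$); outcome $(z_0,\dots,z_k)$. "I has a strategy to play ... such that P" means I can ensure the outcome satisfies P. *)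

theory Defs
  imports "HOL-Analysis.Analysis"
begin

text \<open>Vectors of W are finitely supported real sequences (coefficients w.r.t. the
basis (e_n)); the norm of the ambient Banach space is a function N.\<close>

type_synonym vec = "nat \<Rightarrow> real"

definition supp :: "vec \<Rightarrow> nat set" where
  "supp x = {n. x n \<noteq> 0}"

definition finsupp :: "vec \<Rightarrow> bool" where
  "finsupp x \<longleftrightarrow> finite (supp x)"

definition lincomb :: "nat \<Rightarrow> (nat \<Rightarrow> real) \<Rightarrow> (nat \<Rightarrow> vec) \<Rightarrow> vec" where
  "lincomb k a v = (\<lambda>n. \<Sum>i<k. a i * v i n)"

text \<open>Standing setting: N is a norm on the finitely supported sequences for which the
unit vectors form a Schauder basis of the completion (bounded partial-sum projections);
FF is a countable subfield of the reals closed under norms of FF-combinations.\<close>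

definition setting :: "(vec \<Rightarrow> real) \<Rightarrow> real set \<Rightarrow> bool" where
  "setting N FF \<longleftrightarrow>
     (\<forall>x. finsupp x \<longrightarrow> 0 \<le> N x \<and> (N x = 0 \<longleftrightarrow> x = (\<lambda>_. 0))) \<and>
     (\<forall>x c. finsupp x \<longrightarrow> N (\<lambda>n. c * x n) = \<bar>c\<bar> * N x) \<and>
     (\<forall>x y. finsupp x \<longrightarrow> finsupp y \<longrightarrow> N (\<lambda>n. x n + y n) \<le> N x + N y) \<and>
     (\<exists>C. \<forall>x m. finsupp x \<longrightarrow> N (\<lambda>n. if n \<le> m then x n else 0) \<le> C * N x) \<and>
     countable FF \<and> 0 \<in> FF \<and> 1 \<in> FF \<and>
     (\<forall>a\<in>FF. \<forall>b\<in>FF. a + b \<in> FF \<and> a * b \<in> FF \<and> - a \<in> FF \<and> inverse a \<in> FF) \<and>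
     (\<forall>x. finsupp x \<longrightarrow> (\<forall>n. x n \<in> FF) \<longrightarrow> N x \<in> FF)"

definition WW :: "real set \<Rightarrow> vec set" where
  "WW FF = {x. finsupp x \<and> (\<forall>n. x n \<in> FF)}"

definition fspan :: "real set \<Rightarrow> vec set \<Rightarrow> vec set" where
  "fspan FF S = {x. \<exists>k a v. (\<forall>i<k. a i \<in> FF \<and> v i \<in> S) \<and> x = lincomb k a v}"

definition fdsubspace :: "real set \<Rightarrow> vec set \<Rightarrow> bool" where
  "fdsubspace FF V \<longleftrightarrow> (\<exists>S. finite S \<and> V = fspan FF S)"

definition blockseq :: "vec set \<Rightarrow> (nat \<Rightarrow> vec) \<Rightarrow> bool" where
  "blockseq S x \<longleftrightarrow> (\<forall>n. x n \<in> S \<and> x n \<noteq> (\<lambda>_. 0) \<and>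
      Max (supp (x n)) < Min (supp (x (Suc n))))"

definition nblockseq :: "(vec \<Rightarrow> real) \<Rightarrow> vec set \<Rightarrow> (nat \<Rightarrow> vec) \<Rightarrow> bool" where
  "nblockseq N S y \<longleftrightarrow> blockseq S y \<and> (\<forall>n. N (y n) = 1)"

definition equivK :: "(vec \<Rightarrow> real) \<Rightarrow> real \<Rightarrow> vec list \<Rightarrow> vec list \<Rightarrow> bool" where
  "equivK N K vs ws \<longleftrightarrow> length vs = length ws \<and>
     (\<forall>a::nat \<Rightarrow> real.
        (1 / K) * N (lincomb (length vs) a (\<lambda>i. vs ! i)) \<le> N (lincomb (length ws) a (\<lambda>i. ws ! i)) \<and>
        N (lincomb (length ws) a (\<lambda>i. ws ! i)) \<le> K * N (lincomb (length vs) a (\<lambda>i. vs ! i)))"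

definition Ttree :: "(vec \<Rightarrow> real) \<Rightarrow> (nat \<Rightarrow> vec) \<Rightarrow> vec set \<Rightarrow> real \<Rightarrow> vec list set" where
  "Ttree N y Z K = {vs. set vs \<subseteq> Z \<and> equivK N K vs (map y [0..<length vs])}"

text \<open>Ordinals are elements of a well-ordered type 'o. rho_lt T s \<alpha> means
rho_T(s) < \<alpha>, defined inductively from rho_T(s) = sup{rho_T(t)+1 : s \<prec> t \<in> T}:
rho_T(s) < \<alpha> iff there is \<gamma> < \<alpha> with rho_T(t) < \<gamma> for all proper extensions t \<in> T of s.
Nodes of ill-founded parts never satisfy rho_lt (least fixed point).\<close>
inductive rho_lt :: "'a list set \<Rightarrow> 'a list \<Rightarrow> 'o::wellorder \<Rightarrow> bool" for T where
  "\<gamma> < \<alpha> \<Longrightarrow> (\<And>u. u \<noteq> [] \<Longrightarrow> s @ u \<in> T \<Longrightarrow> rho_lt T (s @ u) \<gamma>) \<Longrightarrow> rho_lt T s \<alpha>"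

text \<open>rank(T) \<le> \<beta> iff rho_T(s) + 1 \<le> \<beta> for all s \<in> T.\<close>
definition rank_le :: "'a list set \<Rightarrow> 'o::wellorder \<Rightarrow> bool" where
  "rank_le T \<beta> \<longleftrightarrow> (\<forall>s\<in>T. rho_lt T s \<beta>)"

definition ozero :: "'o::wellorder \<Rightarrow> bool" where
  "ozero \<xi> \<longleftrightarrow> (\<forall>\<eta>. \<not> \<eta> < \<xi>)"

definition msum :: "vec set list \<Rightarrow> vec set" where
  "msum Fs = {z. \<exists>f. (\<forall>j<length Fs. f j \<in> Fs ! j) \<and> z = (\<lambda>n. \<Sum>j<length Fs. f j n)}"

text \<open>Game F^\<beta>_X. A position is the list h of II's moves (F_j, z_j) so far; a strategy
for I maps h to I's next move (n, \<xi>). II's move (F, z) is legal at h when I has played n.\<close>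
definition II_legal :: "real set \<Rightarrow> vec set \<Rightarrow> (vec set \<times> vec) list \<Rightarrow> nat \<Rightarrow> vec set \<Rightarrow> vec \<Rightarrow> bool" where
  "II_legal FF X h n F z \<longleftrightarrow> fdsubspace FF F \<and> F \<subseteq> X \<and> (\<forall>v\<in>F. \<forall>i\<le>n. v i = 0) \<and>
      z \<noteq> (\<lambda>_. 0) \<and> z \<in> msum (map fst h @ [F])"

definition live :: "real set \<Rightarrow> vec set \<Rightarrow> ((vec set \<times> vec) list \<Rightarrow> nat \<times> 'o::wellorder)
    \<Rightarrow> (vec set \<times> vec) list \<Rightarrow> bool" where
  "live FF X \<sigma> h \<longleftrightarrow> (\<forall>j<length h.
      II_legal FF X (take j h) (fst (\<sigma> (take j h))) (fst (h ! j)) (snd (h ! j)) \<and>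
      \<not> ozero (snd (\<sigma> (take j h))))"

definition complete :: "real set \<Rightarrow> vec set \<Rightarrow> ((vec set \<times> vec) list \<Rightarrow> nat \<times> 'o::wellorder)
    \<Rightarrow> (vec set \<times> vec) list \<Rightarrow> bool" where
  "complete FF X \<sigma> h \<longleftrightarrow> (\<exists>h' F z. h = h' @ [(F, z)] \<and> live FF X \<sigma> h' \<and>
      II_legal FF X h' (fst (\<sigma> h')) F z \<and> ozero (snd (\<sigma> h')))"

definition I_ensures :: "real set \<Rightarrow> vec set \<Rightarrow> 'o::wellorder \<Rightarrow> (vec list \<Rightarrow> bool) \<Rightarrow> bool" where
  "I_ensures FF X \<beta> P \<longleftrightarrow>
     (if ozero \<beta> then P []
      else (\<exists>\<sigma> :: (vec set \<times> vec) list \<Rightarrow> nat \<times> 'o.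
        (\<forall>h. live FF X \<sigma> h \<longrightarrow>
              snd (\<sigma> h) < (if h = [] then \<beta> else snd (\<sigma> (butlast h)))) \<and>
        (\<forall>h. complete FF X \<sigma> h \<longrightarrow> P (map snd h))))"

end

theory Submission
  imports Defs
begin


lemma lincomb_0[simp]: "lincomb 0 a v = (\<lambda>_. 0)" by (simp add: lincomb_def)
lemma lincomb_Suc: "lincomb (Suc k) a v = (\<lambda>n. lincomb k a v n + a k * v k n)"
  by (simp add: lincomb_def)
lemma lincomb_cong: "(\<And>i. i < k \<Longrightarrow> a i = a' i) \<Longrightarrow> (\<And>i. i < k \<Longrightarrow> v i = v' i)
   \<Longrightarrow> lincomb k a v = lincomb k a' v'"
  unfolding lincomb_def by (auto intro!: sum.cong ext)
lemma lincomb_ext: "k \<le> k' \<Longrightarrow> (\<And>i. k \<le> i \<Longrightarrow> i < k' \<Longrightarrow> a i = 0) \<Longrightarrow> lincomb k' a v = lincomb k a v"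
  unfolding lincomb_def by (rule ext, rule sum.mono_neutral_right) auto
lemma lincomb_split: "k \<le> k' \<Longrightarrow> lincomb k' a v = (\<lambda>n. lincomb k a v n + (\<Sum>i\<in>{k..<k'}. a i * v i n))"
  unfolding lincomb_def
  by (rule ext) (metis atLeast0LessThan le0 sum.atLeastLessThan_concat)
lemma lincomb_sub: "(\<lambda>n. lincomb k a v n - lincomb k b v n) = lincomb k (\<lambda>i. a i - b i) v"
  unfolding lincomb_def by (auto simp: sum_subtractf left_diff_distrib)
lemma lincomb_sub2: "(\<lambda>n. lincomb k a v n - lincomb k a w n) = lincomb k a (\<lambda>i n. v i n - w i n)"
  unfolding lincomb_def by (auto simp: sum_subtractf right_diff_distrib)

lemma finsupp_zero[simp]: "finsupp (\<lambda>_. 0)" by (simp add: finsupp_def supp_def)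
lemma finsupp_add: "finsupp x \<Longrightarrow> finsupp y \<Longrightarrow> finsupp (\<lambda>n. x n + y n)"
  unfolding finsupp_def supp_def by (rule finite_subset[of _ "{n. x n \<noteq> 0} \<union> {n. y n \<noteq> 0}"]) auto
lemma finsupp_scale: "finsupp x \<Longrightarrow> finsupp (\<lambda>n. c * x n)"
  unfolding finsupp_def supp_def by (rule finite_subset[of _ "{n. x n \<noteq> 0}"]) auto
lemma finsupp_neg: "finsupp x \<Longrightarrow> finsupp (\<lambda>n. - x n)"
  unfolding finsupp_def supp_def by simp
lemma finsupp_sub: "finsupp x \<Longrightarrow> finsupp y \<Longrightarrow> finsupp (\<lambda>n. x n - y n)"
  using finsupp_add[of x "\<lambda>n. - y n"] finsupp_neg by simp
lemma finsupp_lincomb: "(\<And>i. i < k \<Longrightarrow> finsupp (v i)) \<Longrightarrow> finsupp (lincomb k a v)"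
proof (induction k)
  case 0 then show ?case by simp
next
  case (Suc k) then show ?case
    unfolding lincomb_Suc by (intro finsupp_add finsupp_scale) auto
qed
lemma finsupp_proj: "finsupp x \<Longrightarrow> finsupp (\<lambda>n. if n \<le> m then x n else 0)"
  unfolding finsupp_def supp_def by (rule finite_subset[of _ "{n. x n \<noteq> 0}"]) auto

locale NS = fixes N FF assumes st: "setting N FF"
begin
lemma N_nonneg: "finsupp x \<Longrightarrow> 0 \<le> N x" using st unfolding setting_def by blast
lemma N_zero[simp]: "N (\<lambda>_. 0) = 0" using st unfolding setting_def by auto
lemma N_eq0: "finsupp x \<Longrightarrow> N x = 0 \<Longrightarrow> x = (\<lambda>_. 0)" using st unfolding setting_def by blast
lemma N_scale: "finsupp x \<Longrightarrow> N (\<lambda>n. c * x n) = \<bar>c\<bar> * N x" using st unfolding setting_def by blast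
lemma N_tri: "finsupp x \<Longrightarrow> finsupp y \<Longrightarrow> N (\<lambda>n. x n + y n) \<le> N x + N y"
  using st unfolding setting_def by blast
lemma N_neg: "finsupp x \<Longrightarrow> N (\<lambda>n. - x n) = N x" using N_scale[of x "-1"] by simp
lemma N_tri_sub: "finsupp x \<Longrightarrow> finsupp y \<Longrightarrow> N (\<lambda>n. x n - y n) \<le> N x + N y"
  using N_tri[of x "\<lambda>n. - y n"] N_neg finsupp_neg by simp
lemma N_rev_tri: "finsupp x \<Longrightarrow> finsupp y \<Longrightarrow> N x \<le> N y + N (\<lambda>n. x n - y n)"
  using N_tri[of y "\<lambda>n. x n - y n"] finsupp_sub by simp
lemma N_lincomb: "(\<And>i. i < k \<Longrightarrow> finsupp (v i)) \<Longrightarrow> N (lincomb k a v) \<le> (\<Sum>i<k. \<bar>a i\<bar> * N (v i))"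
proof (induction k)
  case 0 then show ?case by simp
next
  case (Suc k)
  have "N (lincomb (Suc k) a v) \<le> N (lincomb k a v) + N (\<lambda>n. a k * v k n)"
    unfolding lincomb_Suc using Suc.prems by (intro N_tri finsupp_lincomb finsupp_scale) auto
  also have "\<dots> \<le> (\<Sum>i<k. \<bar>a i\<bar> * N (v i)) + \<bar>a k\<bar> * N (v k)"
    using Suc by (simp add: N_scale)
  finally show ?case by simp
qed
lemma proj: obtains C where "C \<ge> 1" "\<And>x m. finsupp x \<Longrightarrow> N (\<lambda>n. if n \<le> m then x n else 0) \<le> C * N x"
proof -
  obtain C where C: "\<forall>x m. finsupp x \<longrightarrow> N (\<lambda>n. if n \<le> m then x n else 0) \<le> C * N x"
    using st unfolding setting_def by blast
  show ?thesis
  proof (rule that[of "max C 1"])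
    fix x m assume "finsupp x"
    then have "C * N x \<le> max C 1 * N x" using N_nonneg by (intro mult_right_mono) auto
    moreover have "N (\<lambda>n. if n \<le> m then x n else 0) \<le> C * N x" using C \<open>finsupp x\<close> by blast
    ultimately show "N (\<lambda>n. if n \<le> m then x n else 0) \<le> max C 1 * N x" by linarith
  qed simp
qed

lemma FF0: "0 \<in> FF" and FF1: "1 \<in> FF" using st unfolding setting_def by auto
lemma FF_add: "a \<in> FF \<Longrightarrow> b \<in> FF \<Longrightarrow> a + b \<in> FF" using st unfolding setting_def by auto
lemma FF_mult: "a \<in> FF \<Longrightarrow> b \<in> FF \<Longrightarrow> a * b \<in> FF" using st unfolding setting_def by auto
lemma FF_neg: "a \<in> FF \<Longrightarrow> - a \<in> FF" using st unfolding setting_def by auto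
lemma FF_inv: "a \<in> FF \<Longrightarrow> inverse a \<in> FF" using st unfolding setting_def by auto
lemma FF_nat: "of_nat n \<in> FF"
  by (induction n) (auto simp: FF0 FF1 FF_add)
lemma FF_int: "of_int z \<in> FF"
proof (cases "z \<ge> 0")
  case True then show ?thesis using FF_nat[of "nat z"] by simp
next
  case False then show ?thesis using FF_neg[OF FF_nat[of "nat (- z)"]] by simp
qed
lemma FF_div: "a \<in> FF \<Longrightarrow> b \<in> FF \<Longrightarrow> a / b \<in> FF"
  by (simp add: divide_inverse FF_mult FF_inv)
end


definition blk :: "(nat \<Rightarrow> vec) \<Rightarrow> bool" where
  "blk b \<longleftrightarrow> (\<forall>i. finsupp (b i) \<and> b i \<noteq> (\<lambda>_. 0) \<and> Max (supp (b i)) < Min (supp (b (Suc i))))"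

lemma blk_supp_ne: "b i \<noteq> (\<lambda>_. 0) \<Longrightarrow> supp (b i) \<noteq> {}"
  unfolding supp_def by auto

lemma blk_range: assumes "blk b" "b i n \<noteq> 0" shows "Min (supp (b i)) \<le> n" "n \<le> Max (supp (b i))"
proof -
  have f: "finite (supp (b i))" using assms unfolding blk_def finsupp_def by auto
  have "n \<in> supp (b i)" using assms(2) unfolding supp_def by auto
  then show "Min (supp (b i)) \<le> n" "n \<le> Max (supp (b i))" using f by auto
qed

lemma blk_minmax: assumes "blk b" shows "Min (supp (b i)) \<le> Max (supp (b i))"
proof -
  have f: "finite (supp (b i))" "supp (b i) \<noteq> {}" using assms blk_supp_ne[of b i] unfolding blk_def finsupp_def by auto
  then show ?thesis by auto
qed

lemma blk_order: assumes "blk b" "i < j" shows "Max (supp (b i)) < Min (supp (b j))"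
  using assms(2)
proof (induction j)
  case 0 then show ?case by simp
next
  case (Suc j)
  have s: "Max (supp (b j)) < Min (supp (b (Suc j)))" using assms(1) unfolding blk_def by auto
  show ?case
  proof (cases "i = j")
    case True then show ?thesis using s by simp
  next
    case False then have "Max (supp (b i)) < Min (supp (b j))" using Suc by simp
    then show ?thesis using s blk_minmax[OF assms(1), of j] by linarith
  qed
qed

lemma blk_order_le: assumes "blk b" "i \<le> j" shows "Max (supp (b i)) \<le> Max (supp (b j))"
  using assms blk_order[OF assms(1), of i j] blk_minmax[OF assms(1), of j]
  by (cases "i = j") auto

lemma blk_idx: assumes "blk b" shows "i \<le> Min (supp (b i))"
proof (induction i)
  case 0 then show ?case by simp
next
  case (Suc i) then show ?case using blk_order[OF assms, of i "Suc i"] blk_minmax[OF assms, of i] by linarith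
qed

lemma blk_vanish: assumes "blk b" "n < i" shows "b i n = 0"
  using blk_range(1)[OF assms(1), of i n] blk_idx[OF assms(1), of i] assms(2) by linarith

lemma blk_pointwise:
  assumes "blk b" "j < k"
  shows "(\<lambda>n. c j * b j n) = (\<lambda>n. (if n \<le> Max (supp (b j)) then lincomb k c b n else 0)
          - (if 0 < j \<and> n \<le> Max (supp (b (j - 1))) then lincomb k c b n else 0))"
proof (rule ext)
  fix n
  have oth: "b i n = 0" if "i \<noteq> j" "b j n \<noteq> 0" for i
  proof (rule ccontr)
    assume h: "b i n \<noteq> 0"
    show False
    proof (cases "i < j")
      case True
      then show False using blk_order[OF assms(1) True] blk_range[OF assms(1) h] blk_range[OF assms(1) that(2)] by linarith
    next
      case False then have ji: "j < i" using that by simp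
      show False using blk_order[OF assms(1) ji] blk_range[OF assms(1) h] blk_range[OF assms(1) that(2)] by linarith
    qed
  qed
  show "c j * b j n = (if n \<le> Max (supp (b j)) then lincomb k c b n else 0)
          - (if 0 < j \<and> n \<le> Max (supp (b (j - 1))) then lincomb k c b n else 0)"
  proof (cases "b j n = 0")
    case False
    have "lincomb k c b n = (\<Sum>i<k. if i = j then c j * b j n else 0)"
      unfolding lincomb_def using oth[OF _ False] by (intro sum.cong) auto
    also have "\<dots> = c j * b j n" using assms(2) by simp
    finally have L: "lincomb k c b n = c j * b j n" .
    have "n \<le> Max (supp (b j))" using blk_range[OF assms(1) False] by simp
    moreover have "\<not> (0 < j \<and> n \<le> Max (supp (b (j - 1))))"
      using blk_range[OF assms(1) False] blk_order[OF assms(1), of "j-1" j] by auto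
    ultimately show ?thesis using L by (simp only: if_True if_False)
  next
    case True
    show ?thesis
    proof (cases "n \<le> Max (supp (b j))")
      case inr: True
      show ?thesis
      proof (cases "0 < j \<and> n \<le> Max (supp (b (j - 1)))")
        case True then show ?thesis using inr \<open>b j n = 0\<close> by simp
      next
        case nle: False
        have "b i n = 0" for i
        proof (cases "i < j")
          case True
          then have "Max (supp (b i)) \<le> Max (supp (b (j - 1)))" using blk_order_le[OF assms(1), of i "j-1"] by simp
          then show ?thesis using nle True blk_range(2)[OF assms(1), of i n] by fastforce
        next
          case False
          show ?thesis
          proof (cases "i = j")
            case True then show ?thesis using \<open>b j n = 0\<close> by simp
          next
            case False then have ji: "j < i" using \<open>\<not> i < j\<close> by simp
            show ?thesis using blk_order[OF assms(1) ji] inr blk_range(1)[OF assms(1), of i n] by fastforce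
          qed
        qed
        then have "lincomb k c b n = 0" unfolding lincomb_def by simp
        then show ?thesis using \<open>b j n = 0\<close> by simp
      qed
    next
      case False
      have c2: "\<not> (0 < j \<and> n \<le> Max (supp (b (j - 1))))"
        using False blk_order[OF assms(1), of "j-1" j] blk_minmax[OF assms(1), of j] by auto
      show ?thesis unfolding if_not_P[OF c2] if_not_P[OF False] using True by simp
    qed
  qed
qed

context NS begin
lemma coeff_bound:
  assumes "blk b" "j < k" "\<And>x m. finsupp x \<Longrightarrow> N (\<lambda>n. if n \<le> m then x n else 0) \<le> C * N x"
  shows "N (\<lambda>n. c j * b j n) \<le> 2 * C * N (lincomb k c b)"
proof -
  let ?w = "lincomb k c b"
  have fw: "finsupp ?w" using assms(1) unfolding blk_def by (intro finsupp_lincomb) auto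
  let ?p1 = "\<lambda>n. if n \<le> Max (supp (b j)) then ?w n else 0"
  let ?p2 = "\<lambda>n. if 0 < j \<and> n \<le> Max (supp (b (j - 1))) then ?w n else 0"
  have f1: "finsupp ?p1" using finsupp_proj[OF fw] by simp
  have n1: "N ?p1 \<le> C * N ?w" using assms(3)[OF fw] by simp
  have f2: "finsupp ?p2" and n2: "N ?p2 \<le> C * N ?w"
  proof -
    show "finsupp ?p2" using finsupp_proj[OF fw, of "Max (supp (b (j - 1)))"]
      by (cases "0 < j") auto
    show "N ?p2 \<le> C * N ?w"
    proof (cases "0 < j")
      case True then show ?thesis using assms(3)[OF fw, of "Max (supp (b (j - 1)))"] by simp
    next
      case False
      have "0 \<le> C * N ?w" using N_nonneg[OF fw] assms(3)[OF fw, of 0] N_nonneg[OF finsupp_proj[OF fw, of 0]] by linarith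
      then show ?thesis using False by simp
    qed
  qed
  have "N (\<lambda>n. c j * b j n) = N (\<lambda>n. ?p1 n - ?p2 n)" using blk_pointwise[OF assms(1,2), of c] by simp
  also have "\<dots> \<le> N ?p1 + N ?p2" using N_tri_sub[OF f1 f2] .
  finally show ?thesis using n1 n2 by linarith
qed
end


lemma rho_mono: "rho_lt T s \<alpha> \<Longrightarrow> \<alpha> \<le> \<alpha>' \<Longrightarrow> rho_lt T s \<alpha>'"
  by (erule rho_lt.cases) (auto intro: rho_lt.intros order_less_le_trans)

lemma msum_Nil: "(\<lambda>_. 0) \<in> msum []" unfolding msum_def by auto

lemma msum_snoc: assumes "w \<in> msum Fs" "u \<in> F" shows "(\<lambda>n. w n + u n) \<in> msum (Fs @ [F])"
proof -
  obtain f where f: "\<forall>j<length Fs. f j \<in> Fs ! j" "w = (\<lambda>n. \<Sum>j<length Fs. f j n)"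
    using assms(1) unfolding msum_def by auto
  let ?f = "f(length Fs := u)"
  have "\<forall>j<length (Fs @ [F]). ?f j \<in> (Fs @ [F]) ! j"
    using f(1) assms(2) by (auto simp: nth_append less_Suc_eq)
  moreover have "(\<lambda>n. w n + u n) = (\<lambda>n. \<Sum>j<length (Fs @ [F]). ?f j n)"
    using f(2) by (auto intro!: ext sum.cong)
  ultimately show ?thesis unfolding msum_def by blast
qed

lemma lincomb_delta: assumes "l < k" shows "lincomb k (\<lambda>i. if i = l then c else 0) v = (\<lambda>n. c * v l n)"
proof (rule ext)
  fix n
  have "lincomb k (\<lambda>i. if i = l then c else 0) v n = (\<Sum>i<k. if i = l then c * v i n else 0)"
    unfolding lincomb_def by (rule sum.cong) auto
  then show "lincomb k (\<lambda>i. if i = l then c else 0) v n = c * v l n" using assms by simp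
qed

lemma lincomb_unit: assumes "l < k" shows "lincomb k (\<lambda>i. if i = l then 1 else 0) v = v l"
proof (rule ext)
  fix n
  have "lincomb k (\<lambda>i. if i = l then 1 else 0) v n = (\<Sum>i<k. if i = l then v i n else 0)"
    unfolding lincomb_def by (rule sum.cong) auto
  then show "lincomb k (\<lambda>i. if i = l then 1 else 0) v n = v l n" using assms by simp
qed


lemma Ttree_prefix: assumes "vs @ ws \<in> Ttree N y Z K" shows "vs \<in> Ttree N y Z K"
proof -
  let ?L = "length vs" let ?L' = "length (vs @ ws)"
  have e: "equivK N K (vs @ ws) (map y [0..<?L'])" and s: "set (vs @ ws) \<subseteq> Z"
    using assms unfolding Ttree_def by auto
  have "equivK N K vs (map y [0..<?L])"
    unfolding equivK_def
  proof (intro conjI allI)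
    fix a :: "nat \<Rightarrow> real"
    let ?a = "\<lambda>i. if i < ?L then a i else 0"
    have 1: "lincomb ?L' ?a (\<lambda>i. (vs @ ws) ! i) = lincomb ?L a (\<lambda>i. vs ! i)"
      by (subst lincomb_ext[of ?L]) (auto intro!: lincomb_cong simp: nth_append)
    have 2: "lincomb (length (map y [0..<?L'])) ?a (\<lambda>i. map y [0..<?L'] ! i) = lincomb (length (map y [0..<?L])) a (\<lambda>i. map y [0..<?L] ! i)"
      by (simp, subst lincomb_ext[of ?L]) (auto intro!: lincomb_cong)
    show "1 / K * N (lincomb ?L a (\<lambda>i. vs ! i)) \<le> N (lincomb (length (map y [0..<?L])) a (\<lambda>i. map y [0..<?L] ! i))"
      "N (lincomb (length (map y [0..<?L])) a (\<lambda>i. map y [0..<?L] ! i)) \<le> K * N (lincomb ?L a (\<lambda>i. vs ! i))"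
      using e[unfolded equivK_def, THEN conjunct2, rule_format, of ?a] unfolding 1 2 by auto
  qed simp
  then show ?thesis using s unfolding Ttree_def by auto
qed

lemma equivK_unit: assumes "equivK N K vs ws" "l < length vs"
  shows "1 / K * N (vs ! l) \<le> N (ws ! l)" "N (ws ! l) \<le> K * N (vs ! l)"
  using assms(1)[unfolded equivK_def, THEN conjunct2, rule_format, of "\<lambda>i. if i = l then 1 else 0"]
    assms(1)[unfolded equivK_def, THEN conjunct1] assms(2)
  by (auto simp: lincomb_unit)

context NS begin

lemma equivK_Nil: "equivK N K [] []" unfolding equivK_def by simp

lemma fspan_0: "(\<lambda>_. 0) \<in> fspan FF S"
  unfolding fspan_def by (rule CollectI, rule exI[of _ 0]) auto

lemma fspan_step: assumes "w \<in> fspan FF S" "a \<in> FF" "s \<in> S" shows "(\<lambda>n. w n + a * s n) \<in> fspan FF S"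
proof -
  obtain k a0 v where kv: "\<forall>i<k. a0 i \<in> FF \<and> v i \<in> S" "w = lincomb k a0 v"
    using assms(1) unfolding fspan_def by auto
  have "(\<lambda>n. w n + a * s n) = lincomb (Suc k) (a0(k := a)) (v(k := s))"
    unfolding lincomb_Suc kv(2) by (auto intro!: ext lincomb_cong[THEN fun_cong])
  moreover have "\<forall>i<Suc k. (a0(k := a)) i \<in> FF \<and> (v(k := s)) i \<in> S" using kv assms by (auto simp: less_Suc_eq)
  ultimately show ?thesis unfolding fspan_def by blast
qed

lemma fspan_add: assumes "u \<in> fspan FF S" "w \<in> fspan FF S" shows "(\<lambda>n. u n + w n) \<in> fspan FF S"
proof -
  obtain k a v where kv: "\<forall>i<k. a i \<in> FF \<and> v i \<in> S" "w = lincomb k a v"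
    using assms(2) unfolding fspan_def by auto
  have "\<forall>k'\<le>k. (\<lambda>n. u n + lincomb k' a v n) \<in> fspan FF S"
  proof (intro allI impI)
    fix k' assume "k' \<le> k" then show "(\<lambda>n. u n + lincomb k' a v n) \<in> fspan FF S"
    proof (induction k')
      case 0 then show ?case using assms(1) by simp
    next
      case (Suc k')
      have "(\<lambda>n. (\<lambda>n. u n + lincomb k' a v n) n + a k' * v k' n) \<in> fspan FF S"
        using Suc kv by (intro fspan_step) auto
      then show ?case unfolding lincomb_Suc by (simp add: add.assoc)
    qed
  qed
  then show ?thesis using kv by auto
qed

lemma fspan_scale: assumes "w \<in> fspan FF S" "c \<in> FF" shows "(\<lambda>n. c * w n) \<in> fspan FF S"
proof -
  obtain k a v where kv: "\<forall>i<k. a i \<in> FF \<and> v i \<in> S" "w = lincomb k a v"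
    using assms(1) unfolding fspan_def by auto
  have "(\<lambda>n. c * w n) = lincomb k (\<lambda>i. c * a i) v" unfolding kv(2) lincomb_def
    by (auto simp: sum_distrib_left mult.assoc)
  moreover have "\<forall>i<k. c * a i \<in> FF \<and> v i \<in> S" using kv assms FF_mult by auto
  ultimately show ?thesis unfolding fspan_def
    by (intro CollectI exI[of _ k] exI[of _ "\<lambda>i. c * a i"] exI[of _ v]) auto
qed

lemma fspan_mono: "S \<subseteq> S' \<Longrightarrow> fspan FF S \<subseteq> fspan FF S'"
  unfolding fspan_def by blast

lemma fspan_vanish: assumes "w \<in> fspan FF S" "\<forall>s\<in>S. s i = 0" shows "w i = 0"
  using assms unfolding fspan_def lincomb_def by (auto intro!: sum.neutral)

lemma fspan_finsupp: assumes "w \<in> fspan FF S" "\<forall>s\<in>S. finsupp s" shows "finsupp w"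
  using assms unfolding fspan_def by (auto intro!: finsupp_lincomb)

lemma lincomb_in_fspan:
  assumes "\<forall>j. c j \<in> FF" "\<forall>j<M. c j \<noteq> 0 \<longrightarrow> j \<in> T"
  shows "lincomb M c b \<in> fspan FF (b ` T)"
  using assms(2)
proof (induction M)
  case 0 then show ?case using fspan_0 by simp
next
  case (Suc M)
  have IH: "lincomb M c b \<in> fspan FF (b ` T)" using Suc by auto
  show ?case
  proof (cases "c M = 0")
    case True then show ?thesis using IH unfolding lincomb_Suc by simp
  next
    case False then show ?thesis unfolding lincomb_Suc using Suc.prems assms(1)
      by (intro fspan_step IH) auto
  qed
qed

lemma rep_fspan:
  assumes "v \<in> fspan FF {b j | j. j \<notin> U}"
  shows "\<exists>M c. (\<forall>j. c j \<in> FF) \<and> (\<forall>j. j \<in> U \<longrightarrow> c j = 0) \<and> v = lincomb M c b"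
proof -
  obtain k a w where kv: "\<forall>i<k. a i \<in> FF \<and> w i \<in> {b j | j. j \<notin> U}" "v = lincomb k a w"
    using assms unfolding fspan_def by auto
  have "\<forall>k'\<le>k. \<exists>M c. (\<forall>j. c j \<in> FF) \<and> (\<forall>j. j \<in> U \<longrightarrow> c j = 0) \<and> lincomb k' a w = lincomb M c b"
  proof (intro allI impI)
    fix k' assume "k' \<le> k"
    then show "\<exists>M c. (\<forall>j. c j \<in> FF) \<and> (\<forall>j. j \<in> U \<longrightarrow> c j = 0) \<and> lincomb k' a w = lincomb M c b"
    proof (induction k')
      case 0 then show ?case by (intro exI[of _ 0] exI[of _ "\<lambda>_. 0"]) (auto simp: FF0)
    next
      case (Suc k')
      obtain M c where Mc: "\<forall>j. c j \<in> FF" "\<forall>j. j \<in> U \<longrightarrow> c j = 0" "lincomb k' a w = lincomb M c b"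
        using Suc by auto
      have "w k' \<in> {b j | j. j \<notin> U}" using kv Suc.prems by auto
      then obtain j where j: "w k' = b j" "j \<notin> U" by blast
      let ?M = "max M (Suc j)"
      let ?c = "\<lambda>i. (if i < M then c i else 0) + (if i = j then a k' else 0)"
      have "lincomb ?M ?c b = (\<lambda>n. lincomb ?M (\<lambda>i. if i < M then c i else 0) b n + lincomb ?M (\<lambda>i. if i = j then a k' else 0) b n)"
        unfolding lincomb_def by (auto simp: distrib_right sum.distrib)
      also have "lincomb ?M (\<lambda>i. if i < M then c i else 0) b = lincomb M c b"
        by (subst lincomb_ext[of M]) (auto intro!: lincomb_cong)
      also have "lincomb ?M (\<lambda>i. if i = j then a k' else 0) b = (\<lambda>n. a k' * b j n)"
        by (rule lincomb_delta) simp
      finally have "lincomb (Suc k') a w = lincomb ?M ?c b"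
        unfolding lincomb_Suc Mc(3) j(1) by simp
      moreover have "\<forall>i. ?c i \<in> FF" using Mc(1) kv Suc.prems FF0 FF_add by auto
      moreover have "\<forall>i. i \<in> U \<longrightarrow> ?c i = 0" using Mc(2) j(2) by auto
      ultimately show ?case by (intro exI[of _ ?M] exI[of _ ?c]) auto
    qed
  qed
  then show ?thesis using kv by auto
qed

end


definition Dn :: "(vec \<Rightarrow> real) \<Rightarrow> (nat \<Rightarrow> vec) \<Rightarrow> real \<Rightarrow> nat \<Rightarrow> nat" where
  "Dn N x e M = nat \<lceil>(\<Sum>j<M. N (x j)) / e\<rceil> + 1"

definition Rn :: "(vec \<Rightarrow> real) \<Rightarrow> (nat \<Rightarrow> vec) \<Rightarrow> real \<Rightarrow> real \<Rightarrow> nat \<Rightarrow> int" where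
  "Rn N x e B M = \<lceil>B * (\<Sum>j<M. 1 / N (x j)) * real (Dn N x e M)\<rceil> + 1"

definition grid :: "(vec \<Rightarrow> real) \<Rightarrow> (nat \<Rightarrow> vec) \<Rightarrow> real \<Rightarrow> real \<Rightarrow> nat \<Rightarrow> vec set" where
  "grid N x e B M = (\<lambda>rs. lincomb M (\<lambda>j. of_int (rs ! j) / real (Dn N x e M)) x) `
      {rs. set rs \<subseteq> {- Rn N x e B M..Rn N x e B M} \<and> length rs = M}"

lemma finite_grid: "finite (grid N x e B M)"
  unfolding grid_def by (intro finite_imageI finite_lists_length_eq) simp

context NS begin

lemma perturb:
  assumes C: "\<And>x m. finsupp x \<Longrightarrow> N (\<lambda>n. if n \<le> m then x n else 0) \<le> C * N x" "C \<ge> 1"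
    and y: "blk y" "\<And>i. N (y i) = 1" and K: "K \<ge> 1"
    and len: "length vs = k" "length zs = k"
    and eq: "equivK N K vs (map y [0..<k])"
    and fs: "\<And>i. i < k \<Longrightarrow> finsupp (vs ! i)" "\<And>i. i < k \<Longrightarrow> finsupp (zs ! i)"
    and cl: "\<And>i. i < k \<Longrightarrow> N (\<lambda>n. (zs ! i) n - (vs ! i) n) \<le> e i"
    and es: "(\<Sum>i<k. e i) \<le> 1 / (4 * C * K)"
  shows "equivK N (2 * K) zs (map y [0..<k])"
  unfolding equivK_def len(2)
proof (intro conjI allI)
  show "k = length (map y [0..<k])" by simp
  fix a :: "nat \<Rightarrow> real"
  have yl: "lincomb (length (map y [0..<k])) a (\<lambda>i. map y [0..<k] ! i) = lincomb k a y"
    by (simp, rule lincomb_cong) auto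
  let ?w = "lincomb k a y" and ?v = "lincomb k a (\<lambda>i. vs ! i)" and ?z = "lincomb k a (\<lambda>i. zs ! i)"
  have fy: "finsupp (y i)" for i using y(1) unfolding blk_def by auto
  have fw: "finsupp ?w" using fy by (intro finsupp_lincomb) auto
  have fv: "finsupp ?v" using fs by (intro finsupp_lincomb) auto
  have fz: "finsupp ?z" using fs by (intro finsupp_lincomb) auto
  have Nw: "0 \<le> N ?w" using N_nonneg[OF fw] .
  have e0: "0 \<le> e i" if "i < k" for i
    using cl[OF that] N_nonneg[OF finsupp_sub[OF fs(2)[OF that] fs(1)[OF that]]] by linarith
  have ai: "\<bar>a i\<bar> \<le> 2 * C * N ?w" if "i < k" for i
    using coeff_bound[OF y(1) that C(1), of a] N_scale[OF fy, of "a i"] y(2)[of i] by simp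
  let ?D = "lincomb k a (\<lambda>i n. (zs ! i) n - (vs ! i) n)"
  have Deq: "(\<lambda>n. ?z n - ?v n) = ?D" by (rule lincomb_sub2)
  have "N ?D \<le> (\<Sum>i<k. \<bar>a i\<bar> * N (\<lambda>n. (zs ! i) n - (vs ! i) n))"
    using fs by (intro N_lincomb finsupp_sub) auto
  also have "\<dots> \<le> (\<Sum>i<k. (2 * C * N ?w) * e i)"
  proof (rule sum_mono)
    fix i assume "i \<in> {..<k}"
    then have ik: "i < k" by simp
    have "\<bar>a i\<bar> * N (\<lambda>n. (zs ! i) n - (vs ! i) n) \<le> \<bar>a i\<bar> * e i"
      using cl[OF ik] by (intro mult_left_mono) auto
    also have "\<dots> \<le> (2 * C * N ?w) * e i" using ai[OF ik] e0[OF ik] by (intro mult_right_mono) auto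
    finally show "\<bar>a i\<bar> * N (\<lambda>n. (zs ! i) n - (vs ! i) n) \<le> (2 * C * N ?w) * e i" .
  qed
  also have "\<dots> = (2 * C * N ?w) * (\<Sum>i<k. e i)" by (simp add: sum_distrib_left)
  also have "\<dots> \<le> (2 * C * N ?w) * (1 / (4 * C * K))" using es C(2) Nw by (intro mult_left_mono) auto
  also have "\<dots> = N ?w / (2 * K)" using C(2) K by (simp add: field_simps)
  finally have ND: "N ?D \<le> N ?w / (2 * K)" .
  have fD: "finsupp ?D" using fs by (intro finsupp_lincomb finsupp_sub) auto
  have z1: "N ?z \<le> N ?v + N ?D" using N_rev_tri[OF fz fv] Deq by simp
  have "(\<lambda>n. ?v n - ?z n) = (\<lambda>n. - ?D n)" using Deq by (metis minus_diff_eq)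
  then have v1: "N ?v \<le> N ?z + N ?D" using N_rev_tri[OF fv fz] N_neg[OF fD] by simp
  have eqa: "1 / K * N ?v \<le> N ?w" "N ?w \<le> K * N ?v"
    using eq[unfolded equivK_def, THEN conjunct2, rule_format, of a] len yl by auto
  have v2: "N ?v \<le> K * N ?w" using eqa(1) K by (simp add: field_simps)
  have kk: "1 \<le> K * K" using mult_mono[OF K K] K by simp
  have "1 * N ?w \<le> (2 * K * K) * N ?w" using kk Nw by (intro mult_right_mono) auto
  then have h1: "N ?w / (2 * K) \<le> K * N ?w" using K by (simp add: field_simps)
  have "N ?z \<le> 2 * K * N ?w" using z1 ND v2 h1 by linarith
  then show "1 / (2 * K) * N ?z \<le> N (lincomb (length (map y [0..<k])) a (\<lambda>i. map y [0..<k] ! i))"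
    unfolding yl using K by (simp add: field_simps)
  have "K * N ?v \<le> K * (N ?z + N ?D)" using v1 K by (intro mult_left_mono) auto
  then have "K * N ?v \<le> K * N ?z + K * N ?D" by (simp add: algebra_simps)
  moreover have "K * N ?D \<le> N ?w / 2" using ND K by (simp add: field_simps)
  ultimately have "N ?w \<le> K * N ?z + N ?w / 2" using eqa(2) by linarith
  then show "N (lincomb (length (map y [0..<k])) a (\<lambda>i. map y [0..<k] ! i)) \<le> 2 * K * N ?z"
    unfolding yl by linarith
qed

end

context NS begin
lemma grid_approx:
  assumes C: "\<And>x m. finsupp x \<Longrightarrow> N (\<lambda>n. if n \<le> m then x n else 0) \<le> C * N x"
    and C1: "C \<ge> 1" and x: "blk x" and e: "e > 0"
    and c: "\<forall>j. c j \<in> FF" and v: "v = lincomb M c x" and Nv: "2 * C * N v \<le> B"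
  shows "\<exists>q. (\<forall>j. q j \<in> FF) \<and> (\<forall>j. c j = 0 \<longrightarrow> q j = 0) \<and> lincomb M q x \<in> grid N x e B M
           \<and> N (\<lambda>n. lincomb M q x n - v n) \<le> e"
proof -
  define D where "D = Dn N x e M"
  define S where "S = (\<Sum>j<M. N (x j))"
  define S1 where "S1 = (\<Sum>j<M. 1 / N (x j))"
  define R where "R = Rn N x e B M"
  have fx: "finsupp (x j)" "x j \<noteq> (\<lambda>_. 0)" for j using x unfolding blk_def by auto
  have Nxpos: "N (x j) > 0" for j using N_nonneg[OF fx(1)[of j]] N_eq0[OF fx(1)[of j]] fx(2)[of j] by force
  have S0: "S \<ge> 0" unfolding S_def using Nxpos by (intro sum_nonneg) (auto intro: less_imp_le)
  have Dpos: "real D > 0" unfolding D_def Dn_def by simp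
  have "S / e \<le> real (nat \<lceil>S / e\<rceil>)" by (rule real_nat_ceiling_ge)
  then have DS: "S / e < real D" unfolding D_def Dn_def S_def[symmetric] by simp
  define q where "q j = of_int \<lfloor>c j * D\<rfloor> / real D" for j
  have qF: "\<forall>j. q j \<in> FF" unfolding q_def by (auto intro: FF_div FF_int FF_nat[of D, simplified])
  have q0: "\<forall>j. c j = 0 \<longrightarrow> q j = 0" unfolding q_def by simp
  have qc: "\<bar>q j - c j\<bar> \<le> 1 / real D" for j
  proof -
    have "q j - c j = (of_int \<lfloor>c j * D\<rfloor> - c j * D) / real D" unfolding q_def using Dpos by (simp add: field_simps)
    moreover have "\<bar>of_int \<lfloor>c j * D\<rfloor> - c j * D\<bar> \<le> 1" by linarith
    ultimately show ?thesis using Dpos by (simp add: abs_div_pos divide_right_mono)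
  qed
  have fv: "finsupp v" unfolding v using fx by (intro finsupp_lincomb) auto
  have cb: "\<bar>c j\<bar> * real D \<le> B * S1 * real D" if "j < M" for j
  proof -
    have "N (\<lambda>n. c j * x j n) \<le> 2 * C * N v" unfolding v by (rule coeff_bound[OF x that C])
    then have "\<bar>c j\<bar> * N (x j) \<le> B" using N_scale[OF fx(1)] Nv by simp
    then have "\<bar>c j\<bar> \<le> B / N (x j)" using Nxpos[of j] by (simp add: field_simps)
    also have "\<dots> = B * (1 / N (x j))" by simp
    also have "\<dots> \<le> B * S1"
    proof -
      have "1 / N (x j) \<le> S1" unfolding S1_def using that Nxpos
        by (intro member_le_sum) (auto intro: less_imp_le)
      moreover have "B \<ge> 0" using Nv C1 N_nonneg[OF fv]
        by (smt (verit) mult_nonneg_nonneg)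
      ultimately show ?thesis using mult_left_mono by blast
    qed
    finally show ?thesis using Dpos by (simp add: mult_right_mono)
  qed
  define rs where "rs = map (\<lambda>j. \<lfloor>c j * D\<rfloor>) [0..<M]"
  have rsR: "set rs \<subseteq> {- R..R}"
  proof
    fix r assume "r \<in> set rs"
    then obtain j where j: "j < M" "r = \<lfloor>c j * D\<rfloor>" unfolding rs_def by auto
    have "\<bar>c j * D\<bar> \<le> B * S1 * real D" using cb[OF j(1)] Dpos by (simp add: abs_mult)
    moreover have "R = \<lceil>B * S1 * real D\<rceil> + 1" unfolding R_def Rn_def S1_def D_def by simp
    ultimately show "r \<in> {- R..R}" using j(2) by (simp, linarith)
  qed
  have gl: "lincomb M q x = lincomb M (\<lambda>j. of_int (rs ! j) / real D) x"
    unfolding q_def rs_def by (rule lincomb_cong) auto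
  have ing: "lincomb M q x \<in> grid N x e B M"
    unfolding grid_def gl D_def[symmetric] R_def[symmetric] using rsR by (auto simp: rs_def)
  have "N (\<lambda>n. lincomb M q x n - v n) = N (lincomb M (\<lambda>j. q j - c j) x)"
    unfolding v lincomb_sub ..
  also have "\<dots> \<le> (\<Sum>j<M. \<bar>q j - c j\<bar> * N (x j))" using fx by (intro N_lincomb) auto
  also have "\<dots> \<le> (\<Sum>j<M. (1 / real D) * N (x j))"
    using qc Nxpos by (intro sum_mono mult_right_mono) (auto intro: less_imp_le)
  also have "\<dots> = S / real D" unfolding S_def by (simp add: sum_divide_distrib)
  also have "\<dots> \<le> e" using DS Dpos e S0 by (simp add: field_simps)
  finally show ?thesis using qF q0 ing by blast
qed

end


lemma geo_half: "(\<Sum>i<k. (1/2::real) ^ Suc i) = 1 - (1/2) ^ k"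
  by (induction k) (auto simp: field_simps)

theorem lemma4p9:
  fixes N :: "vec \<Rightarrow> real" and FF :: "real set" and x :: "nat \<Rightarrow> vec"
    and \<beta> :: "'o::wellorder"
  assumes "setting N FF"
    and "blockseq (WW FF) x"
    and "countable {\<xi>. \<xi> < \<beta>}"
    and "\<forall>y K. nblockseq N (fspan FF (range x)) y \<and> K \<ge> 1 \<longrightarrow>
           I_ensures FF (fspan FF (range x)) \<beta>
             (\<lambda>zs. \<not> equivK N K zs (map y [0..<length zs]))"
  shows "\<forall>y K. nblockseq N (fspan FF (range x)) y \<and> K \<ge> 1 \<longrightarrow>
           (\<exists>J :: nat \<Rightarrow> nat set.
              (\<forall>m. \<exists>a b. a \<le> b \<and> J m = {a..b}) \<and>
              filterlim (\<lambda>m. Min (J m)) at_top sequentially \<and>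
              (\<forall>A. infinite A \<and> 0 \<in> A \<longrightarrow>
                 rank_le (Ttree N y (fspan FF {x j | j. j \<notin> (\<Union>m\<in>A. J m)}) K) \<beta>))"
proof (intro allI impI)
  fix y and K :: real
  assume yK: "nblockseq N (fspan FF (range x)) y \<and> K \<ge> 1"
  let ?X = "fspan FF (range x)"
  interpret NS N FF using assms(1) by unfold_locales
  obtain C where C1: "C \<ge> 1" and Cp: "\<And>x m. finsupp x \<Longrightarrow> N (\<lambda>n. if n \<le> m then x n else 0) \<le> C * N x"
    using proj by blast
  have K1: "K \<ge> 1" using yK by simp
  have xW: "x j \<in> WW FF" for j using assms(2) unfolding blockseq_def by auto
  have fx: "finsupp (x j)" for j using xW unfolding WW_def by auto
  have bx: "blk x" using assms(2) fx unfolding blockseq_def blk_def by auto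
  have fX: "finsupp w" if "w \<in> ?X" for w using fspan_finsupp[OF that] fx by auto
  have by1: "blk y" using yK fX unfolding nblockseq_def blockseq_def blk_def by auto
  have Ny: "N (y i) = 1" for i using yK unfolding nblockseq_def by auto
  have IE: "I_ensures FF ?X \<beta> (\<lambda>zs. \<not> equivK N (2 * K) zs (map y [0..<length zs]))"
    using assms(4) yK by auto
  show "\<exists>J :: nat \<Rightarrow> nat set.
              (\<forall>m. \<exists>a b. a \<le> b \<and> J m = {a..b}) \<and>
              filterlim (\<lambda>m. Min (J m)) at_top sequentially \<and>
              (\<forall>A. infinite A \<and> 0 \<in> A \<longrightarrow>
                 rank_le (Ttree N y (fspan FF {x j | j. j \<notin> (\<Union>m\<in>A. J m)}) K) \<beta>)"
  proof (cases "ozero \<beta>")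
    case True
    then have "\<not> equivK N (2 * K) [] []" using IE unfolding I_ensures_def by simp
    then show ?thesis using equivK_Nil by blast
  next
    case False
    then obtain \<sigma> :: "(vec set \<times> vec) list \<Rightarrow> nat \<times> 'o" where
      \<sigma>1: "\<And>h. live FF ?X \<sigma> h \<Longrightarrow> snd (\<sigma> h) < (if h = [] then \<beta> else snd (\<sigma> (butlast h)))" and
      \<sigma>2: "\<And>h. complete FF ?X \<sigma> h \<Longrightarrow> \<not> equivK N (2 * K) (map snd h) (map y [0..<length (map snd h)])"
      using IE unfolding I_ensures_def by auto
    define \<epsilon> where "\<epsilon> l = 1 / (4 * C * K) * (1/2) ^ Suc l" for l
    define B where "B = 2 * C * K"
    define G where "G M l = grid N x (\<epsilon> l) B M" for M l
    define Pos where "Pos M = {h. length h \<le> M \<and> (\<forall>l<length h. (\<exists>S\<subseteq>{..<M}. fst (h ! l) = fspan FF (x ` S))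
        \<and> (\<exists>M'\<le>M. snd (h ! l) \<in> G M' l))}" for M
    define Alph where "Alph M = ((\<lambda>S. fspan FF (x ` S)) ` Pow {..<M}) \<times> (\<Union>M'\<in>{..M}. \<Union>l\<in>{..<M}. G M' l)" for M
    have finPos: "finite (Pos M)" for M
    proof -
      have "finite (Alph M)" unfolding Alph_def G_def by (intro finite_cartesian_product finite_imageI finite_UN_I finite_grid) auto
      then have "finite {h. set h \<subseteq> Alph M \<and> length h \<le> M}" by (rule finite_lists_length_le)
      moreover have "Pos M \<subseteq> {h. set h \<subseteq> Alph M \<and> length h \<le> M}"
      proof
        fix h assume h: "h \<in> Pos M"
        have nth_in: "h ! l \<in> Alph M" if "l < length h" for l
        proof -
          have hP: "\<exists>S\<subseteq>{..<M}. fst (h ! l) = fspan FF (x ` S)" "\<exists>M'\<le>M. snd (h ! l) \<in> G M' l" "length h \<le> M"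
            using h that unfolding Pos_def by auto
          have lM: "l < M" using hP(3) that by simp
          have 1: "fst (h ! l) \<in> (\<lambda>S. fspan FF (x ` S)) ` Pow {..<M}" using hP(1) by blast
          have 2: "snd (h ! l) \<in> (\<Union>M'\<in>{..M}. \<Union>l\<in>{..<M}. G M' l)" using hP(2) lM by blast
          show ?thesis unfolding Alph_def using 1 2 by (simp add: mem_Times_iff)
        qed
        have "set h \<subseteq> Alph M" using nth_in by (metis in_set_conv_nth subsetI)
        then show "h \<in> {h. set h \<subseteq> Alph M \<and> length h \<le> M}" using h unfolding Pos_def by auto
      qed
      ultimately show ?thesis by (rule finite_subset[rotated])
    qed
    have Nil_Pos: "[] \<in> Pos M" for M unfolding Pos_def by simp
    define bnd where "bnd M = max M (Max ((\<lambda>h. fst (\<sigma> h)) ` Pos M))" for M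
    have bnd_ge: "fst (\<sigma> h) \<le> bnd M" if "h \<in> Pos M" for h M
      unfolding bnd_def using finPos that by (intro max.coboundedI2 Max_ge) auto
    have bnd_ge2: "M \<le> bnd M" for M unfolding bnd_def by simp
    define a where "a = rec_nat 0 (\<lambda>_ am. bnd am + 2)"
    have a0: "a 0 = 0" and aS: "a (Suc m) = bnd (a m) + 2" for m unfolding a_def by simp_all
    have a_sm: "strict_mono a" unfolding strict_mono_Suc_iff
    proof
      fix m show "a m < a (Suc m)" using aS[of m] bnd_ge2[of "a m"] by linarith
    qed
    have a_ge: "m \<le> a m" for m using strict_mono_imp_increasing[OF a_sm] by simp
    define J where "J m = {a m..bnd (a m)}" for m
    show ?thesis
    proof (intro exI[of _ J] conjI allI impI)
      show "\<exists>a b. a \<le> b \<and> J m = {a..b}" for m unfolding J_def using bnd_ge2 by blast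
      have "Min (J m) = a m" for m unfolding J_def using bnd_ge2[of "a m"] by (intro Min_eqI) auto
      then show "filterlim (\<lambda>m. Min (J m)) at_top sequentially" using filterlim_subseq[OF a_sm] by simp
      fix A :: "nat set" assume A: "infinite A \<and> 0 \<in> A"
      define U where "U = (\<Union>m\<in>A. J m)"
      define Z where "Z = fspan FF {x j | j. j \<notin> U}"
      define T where "T = Ttree N y Z K"
      have key1: "bnd (a m) < j" if "j \<notin> U" "m \<in> A" "a m \<le> j" for j m
        using that unfolding U_def J_def by auto
      have key2: "\<exists>m\<in>A. M \<le> a m" for M
      proof -
        obtain m where "m \<in> A" "M \<le> m" using A infinite_nat_iff_unbounded_le by blast
        then show ?thesis using a_ge[of m] by (intro bexI[of _ m]) auto
      qed
      have fZ: "finsupp w" if "w \<in> Z" for w using fspan_finsupp[OF that[unfolded Z_def]] fx by auto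
      have eps_pos: "\<epsilon> l > 0" for l unfolding \<epsilon>_def using C1 K1 by simp
      have eps_small: "\<epsilon> l < 1 / K" for l
      proof -
        have "(1/2::real) ^ Suc l \<le> 1" by (rule power_le_one) auto
        then have "\<epsilon> l \<le> 1 / (4 * C * K)" unfolding \<epsilon>_def using C1 K1
          by (intro mult_left_le) auto
        also have "\<dots> < 1 / K" using C1 K1 by (simp add: field_simps)
        finally show ?thesis .
      qed
      have eps_sum: "(\<Sum>i<k. \<epsilon> i) \<le> 1 / (4 * C * K)" for k
      proof -
        have "(\<Sum>i<k. \<epsilon> i) = 1 / (4 * C * K) * (\<Sum>i<k. (1/2::real) ^ Suc i)"
          unfolding \<epsilon>_def by (simp add: sum_distrib_left)
        also have "\<dots> = 1 / (4 * C * K) * (1 - (1/2) ^ k)" by (simp only: geo_half)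
        also have "\<dots> \<le> 1 / (4 * C * K)" using C1 K1 by (intro mult_left_le) auto
        finally show ?thesis .
      qed
      define Good where "Good h M s \<longleftrightarrow> h \<in> Pos M \<and> live FF ?X \<sigma> h \<and>
          (\<forall>c. (\<forall>j. c j \<in> FF) \<and> (\<forall>j. j \<in> U \<longrightarrow> c j = 0) \<longrightarrow> lincomb M c x \<in> msum (map fst h)) \<and>
          (\<forall>j. j \<notin> U \<and> M \<le> j \<longrightarrow> fst (\<sigma> h) < j) \<and> length h = length s \<and>
          (\<forall>l<length s. N (\<lambda>n. snd (h ! l) n - (s ! l) n) \<le> \<epsilon> l \<and> finsupp (snd (h ! l)))" for h M s
      have claim: "\<forall>h M s. Good h M s \<and> s \<in> T \<and> snd (\<sigma> h) = \<xi> \<longrightarrow>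
          (\<forall>u. u \<noteq> [] \<and> s @ u \<in> T \<longrightarrow> rho_lt T (s @ u) \<xi>)" for \<xi>
      proof (induction \<xi> rule: less_induct)
        case (less \<xi>)
        show ?case
        proof (intro allI impI, elim conjE)
          fix h M s u assume G: "Good h M s" and sT: "s \<in> T" and sx: "snd (\<sigma> h) = \<xi>"
            and un: "u \<noteq> []" and suT: "s @ u \<in> T"
          have hP: "h \<in> Pos M" and hl: "live FF ?X \<sigma> h"
            and hm: "\<And>c. (\<forall>j. c j \<in> FF) \<Longrightarrow> (\<forall>j. j \<in> U \<longrightarrow> c j = 0) \<Longrightarrow> lincomb M c x \<in> msum (map fst h)"
            and hb: "\<And>j. j \<notin> U \<Longrightarrow> M \<le> j \<Longrightarrow> fst (\<sigma> h) < j" and hlen: "length h = length s"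
            and hc: "\<And>l. l < length s \<Longrightarrow> N (\<lambda>n. snd (h ! l) n - (s ! l) n) \<le> \<epsilon> l \<and> finsupp (snd (h ! l))"
            using G unfolding Good_def by auto
          obtain v u' where u: "u = v # u'" using un by (cases u) auto
          define l where "l = length s"
          have t'T: "s @ [v] \<in> T" using suT Ttree_prefix[of "s @ [v]" u' N y Z K] unfolding u T_def by simp
          have vZ: "v \<in> Z" using t'T unfolding T_def Ttree_def by auto
          have sZ: "set (s @ [v]) \<subseteq> Z" using t'T unfolding T_def Ttree_def by auto
          have eqt: "equivK N K (s @ [v]) (map y [0..<Suc l])" using t'T unfolding T_def Ttree_def l_def by auto
          have eu1: "1 / K * N v \<le> 1" and eu2: "1 \<le> K * N v"
            using equivK_unit[OF eqt, of l] Ny[of l] unfolding l_def by (auto simp: nth_append)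
          have Nv1: "N v \<le> K" using eu1 K1 by (simp add: field_simps)
          obtain Mv c where c: "\<forall>j. c j \<in> FF" "\<forall>j. j \<in> U \<longrightarrow> c j = 0" "v = lincomb Mv c x"
            using rep_fspan[OF vZ[unfolded Z_def]] by blast
          obtain m where mA: "m \<in> A" and am: "Suc M + Mv \<le> a m" using key2 by blast
          define M' where "M' = a m"
          define c' where "c' j = (if j < Mv then c j else 0)" for j
          have "lincomb M' c' x = lincomb Mv c' x" by (rule lincomb_ext) (use am in \<open>auto simp: c'_def M'_def\<close>)
          also have "\<dots> = lincomb Mv c x" by (rule lincomb_cong) (auto simp: c'_def)
          finally have v': "v = lincomb M' c' x" using c(3) by simp
          have c'F: "\<forall>j. c' j \<in> FF" using c(1) FF0 unfolding c'_def by auto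
          have c'U: "\<forall>j. j \<in> U \<longrightarrow> c' j = 0" using c(2) unfolding c'_def by auto
          have fv: "finsupp v" using fZ[OF vZ] .
          have NvB: "2 * C * N v \<le> B" unfolding B_def using Nv1 C1 by (simp add: mult_left_mono)
          obtain q where q: "\<forall>j. q j \<in> FF" "\<forall>j. c' j = 0 \<longrightarrow> q j = 0" "lincomb M' q x \<in> grid N x (\<epsilon> l) B M'"
              "N (\<lambda>n. lincomb M' q x n - v n) \<le> \<epsilon> l"
            using grid_approx[OF Cp C1 bx eps_pos c'F v' NvB] by blast
          define z where "z = lincomb M' q x"
          have qU: "\<forall>j. j \<in> U \<longrightarrow> q j = 0" using q(2) c'U by auto
          have fz: "finsupp z" unfolding z_def using fx by (intro finsupp_lincomb) auto
          have zG: "z \<in> G M' l" using q(3) unfolding z_def G_def .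
          have zv: "N (\<lambda>n. z n - v n) \<le> \<epsilon> l" using q(4) unfolding z_def .
          have z0: "z \<noteq> (\<lambda>_. 0)"
          proof
            assume "z = (\<lambda>_. 0)"
            then have "N v \<le> \<epsilon> l" using zv N_neg[OF fv] by simp
            then have "K * N v < K * (1 / K)" using eps_small[of l] K1 by (intro mult_strict_left_mono) auto
            then show False using eu2 K1 by simp
          qed
          define S' where "S' = {j. j \<notin> U \<and> M \<le> j \<and> j < M'}"
          define F where "F = fspan FF (x ` S')"
          have MM': "M < M'" using am unfolding M'_def by simp
          have tail: "(\<lambda>n. \<Sum>i\<in>{M..<M'}. cc i * x i n) \<in> F"
            if cc: "\<forall>j. cc j \<in> FF" "\<forall>j. j \<in> U \<longrightarrow> cc j = 0" for cc
          proof -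
            define dd where "dd i = (if M \<le> i then cc i else 0)" for i
            have "lincomb M' dd x = (\<lambda>n. lincomb M dd x n + (\<Sum>i\<in>{M..<M'}. dd i * x i n))"
              using lincomb_split[of M M' dd x] MM' by simp
            also have "lincomb M dd x = lincomb M (\<lambda>_. 0) x" by (rule lincomb_cong) (auto simp: dd_def)
            also have "lincomb M (\<lambda>_. 0) x = (\<lambda>_. 0)" unfolding lincomb_def by simp
            finally have "lincomb M' dd x = (\<lambda>n. \<Sum>i\<in>{M..<M'}. cc i * x i n)"
              unfolding dd_def by (auto intro!: ext sum.cong)
            moreover have "lincomb M' dd x \<in> fspan FF (x ` S')"
              using cc FF0 by (intro lincomb_in_fspan) (auto simp: dd_def S'_def)
            ultimately show ?thesis unfolding F_def by simp
          qed
          have msum_ext: "lincomb M' cc x \<in> msum (map fst h @ [F])"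
            if cc: "\<forall>j. cc j \<in> FF" "\<forall>j. j \<in> U \<longrightarrow> cc j = 0" for cc
            using msum_snoc[OF hm[OF cc] tail[OF cc]] lincomb_split[of M M' cc x] MM' by simp
          let ?n = "fst (\<sigma> h)"
          have legal: "II_legal FF ?X h ?n F z"
            unfolding II_legal_def
          proof (intro conjI)
            have "S' \<subseteq> {..<M'}" unfolding S'_def by auto
            then have "finite (x ` S')" by (meson finite_imageI finite_lessThan finite_subset)
            then show "fdsubspace FF F" unfolding fdsubspace_def F_def by blast
            show "F \<subseteq> ?X" unfolding F_def by (rule fspan_mono) auto
            show "\<forall>w\<in>F. \<forall>i\<le>?n. w i = 0"
            proof (intro ballI allI impI)
              fix w i assume wF: "w \<in> F" and i: "i \<le> ?n"
              have "\<forall>s\<in>x ` S'. s i = 0"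
              proof
                fix s assume "s \<in> x ` S'" then obtain j where j: "j \<in> S'" "s = x j" by auto
                then have "?n < j" using hb unfolding S'_def by auto
                then show "s i = 0" using blk_vanish[OF bx, of i j] i j(2) by auto
              qed
              then show "w i = 0" using wF unfolding F_def by (rule fspan_vanish[rotated])
            qed
            show "z \<noteq> (\<lambda>_. 0)" by (rule z0)
            show "z \<in> msum (map fst h @ [F])" unfolding z_def by (rule msum_ext[OF q(1) qU])
          qed
          define h' where "h' = h @ [(F, z)]"
          have lh': "length h' = Suc l" unfolding h'_def l_def using hlen by simp
          have close': "N (\<lambda>n. snd (h' ! i) n - ((s @ [v]) ! i) n) \<le> \<epsilon> i \<and> finsupp (snd (h' ! i))"
            if "i < length (s @ [v])" for i
          proof (cases "i < l")
            case True
            then have "h' ! i = h ! i" "(s @ [v]) ! i = s ! i" unfolding h'_def l_def using hlen by (auto simp: nth_append)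
            then show ?thesis using hc[of i] True unfolding l_def by simp
          next
            case False
            then have "i = l" using that unfolding l_def by simp
            then have "h' ! i = (F, z)" "(s @ [v]) ! i = v" unfolding h'_def l_def using hlen by (auto simp: nth_append)
            then show ?thesis using zv fz \<open>i = l\<close> by simp
          qed
          have eq2: "equivK N (2 * K) (map snd h') (map y [0..<Suc l])"
          proof (rule perturb[OF Cp C1 by1 Ny K1 _ _ eqt])
            show "length (s @ [v]) = Suc l" unfolding l_def by simp
            show "length (map snd h') = Suc l" using lh' by simp
            show "finsupp ((s @ [v]) ! i)" if "i < Suc l" for i
              using that sZ fZ unfolding l_def by (metis length_append_singleton nth_mem subsetD)
            show "finsupp (map snd h' ! i)" if "i < Suc l" for i using close'[of i] that lh' unfolding l_def by simp
            show "N (\<lambda>n. (map snd h' ! i) n - ((s @ [v]) ! i) n) \<le> \<epsilon> i" if "i < Suc l" for i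
              using close'[of i] that lh' unfolding l_def by simp
            show "(\<Sum>i<Suc l. \<epsilon> i) \<le> 1 / (4 * C * K)" by (rule eps_sum)
          qed
          show "rho_lt T (s @ u) \<xi>"
          proof (cases "ozero \<xi>")
            case True
            have "complete FF ?X \<sigma> h'" unfolding complete_def h'_def using hl legal True sx by blast
            have "\<not> equivK N (2 * K) (map snd h') (map y [0..<Suc l])"
              using \<sigma>2[OF \<open>complete FF ?X \<sigma> h'\<close>] unfolding length_map lh' .
            then show ?thesis using eq2 by blast
          next
            case False
            have live': "live FF ?X \<sigma> h'" unfolding live_def
            proof (intro allI impI)
              fix j assume "j < length h'"
              then have "j < length h \<or> j = length h" unfolding h'_def by auto
              then show "II_legal FF ?X (take j h') (fst (\<sigma> (take j h'))) (fst (h' ! j)) (snd (h' ! j)) \<and>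
                  \<not> ozero (snd (\<sigma> (take j h')))"
              proof
                assume j: "j < length h"
                then have "take j h' = take j h" "h' ! j = h ! j" unfolding h'_def by (auto simp: nth_append)
                then show ?thesis using hl j unfolding live_def by auto
              next
                assume "j = length h"
                then have "take j h' = h" "h' ! j = (F, z)" unfolding h'_def by auto
                then show ?thesis using legal False sx by auto
              qed
            qed
            have lt: "snd (\<sigma> h') < \<xi>" using \<sigma>1[OF live'] sx unfolding h'_def by simp
            have lenh: "length h \<le> M" using hP unfolding Pos_def by auto
            have Pos': "h' \<in> Pos M'" unfolding Pos_def
            proof (rule CollectI, rule conjI)
              show "length h' \<le> M'" using lenh MM' unfolding h'_def by simp
              show "\<forall>i<length h'. (\<exists>S\<subseteq>{..<M'}. fst (h' ! i) = fspan FF (x ` S)) \<and> (\<exists>M''\<le>M'. snd (h' ! i) \<in> G M'' i)"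
              proof (intro allI impI)
              fix i assume i: "i < length h'"
              show "(\<exists>S\<subseteq>{..<M'}. fst (h' ! i) = fspan FF (x ` S)) \<and> (\<exists>M''\<le>M'. snd (h' ! i) \<in> G M'' i)"
              proof (cases "i < length h")
                case True
                then have hi: "h' ! i = h ! i" unfolding h'_def by (auto simp: nth_append)
                obtain S M'' where "S \<subseteq> {..<M}" "fst (h ! i) = fspan FF (x ` S)" "M'' \<le> M" "snd (h ! i) \<in> G M'' i"
                  using hP True unfolding Pos_def by blast
                then show ?thesis unfolding hi using MM'
                  by (intro conjI exI[of _ S] exI[of _ M'']) auto
              next
                case False
                then have "i = length h" using i unfolding h'_def by simp
                then have hi: "h' ! i = (F, z)" unfolding h'_def by simp
                have "S' \<subseteq> {..<M'}" unfolding S'_def by auto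
                moreover have "i = l" using \<open>i = length h\<close> hlen unfolding l_def by simp
                ultimately show ?thesis unfolding hi F_def using zG by auto
              qed
              qed
            qed
            have Good': "Good h' M' (s @ [v])" unfolding Good_def
            proof (intro conjI allI impI)
              show "h' \<in> Pos M'" by (rule Pos')
              show "live FF ?X \<sigma> h'" by (rule live')
              fix cc assume "(\<forall>j. cc j \<in> FF) \<and> (\<forall>j. j \<in> U \<longrightarrow> cc j = 0)"
              then show "lincomb M' cc x \<in> msum (map fst h')" using msum_ext unfolding h'_def by simp
            next
              fix j assume j: "j \<notin> U \<and> M' \<le> j"
              have "fst (\<sigma> h') \<le> bnd (a m)" using bnd_ge[OF Pos'] unfolding M'_def .
              then show "fst (\<sigma> h') < j" using key1[of j m] j mA unfolding M'_def by force
            next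
              show "length h' = length (s @ [v])" using lh' unfolding l_def by simp
            next
              fix i assume "i < length (s @ [v])"
              then show "N (\<lambda>n. snd (h' ! i) n - ((s @ [v]) ! i) n) \<le> \<epsilon> i" "finsupp (snd (h' ! i))"
                using close' by auto
            qed
            have IH: "\<forall>u. u \<noteq> [] \<and> (s @ [v]) @ u \<in> T \<longrightarrow> rho_lt T ((s @ [v]) @ u) (snd (\<sigma> h'))"
              using less.IH[OF lt] Good' t'T by blast
            have rt: "rho_lt T (s @ [v]) \<xi>"
              by (rule rho_lt.intros[OF lt]) (use IH in blast)
            show ?thesis
            proof (cases "u' = []")
              case True then show ?thesis using rt u by simp
            next
              case False
              have "rho_lt T ((s @ [v]) @ u') (snd (\<sigma> h'))" using IH False suT u by simp
              then show ?thesis using rho_mono[OF _ less_imp_le[OF lt]] u by simp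
            qed
          qed
        qed
      qed
      have live0: "live FF ?X \<sigma> []" unfolding live_def by simp
      have x0: "snd (\<sigma> []) < \<beta>" using \<sigma>1[OF live0] by simp
      have G0: "Good [] 0 []" unfolding Good_def
      proof (intro conjI allI impI)
        show "[] \<in> Pos 0" by (rule Nil_Pos)
        show "live FF ?X \<sigma> []" by (rule live0)
        fix cc show "lincomb 0 cc x \<in> msum (map fst [])" using msum_Nil by simp
      next
        fix j assume j: "j \<notin> U \<and> 0 \<le> j"
        have "fst (\<sigma> []) \<le> bnd (a 0)" using bnd_ge[OF Nil_Pos] by simp
        then show "fst (\<sigma> []) < j" using key1[of j 0] j A a0 by force
      qed auto
      have NilT: "[] \<in> T" unfolding T_def Ttree_def using equivK_Nil by simp
      have ext0: "\<forall>u. u \<noteq> [] \<and> [] @ u \<in> T \<longrightarrow> rho_lt T ([] @ u) (snd (\<sigma> []))"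
        using claim G0 NilT by blast
      have TT: "Ttree N y (fspan FF {x j | j. j \<notin> (\<Union>m\<in>A. J m)}) K = T" unfolding T_def Z_def U_def ..
      show "rank_le (Ttree N y (fspan FF {x j | j. j \<notin> (\<Union>m\<in>A. J m)}) K) \<beta>"
        unfolding TT rank_le_def
      proof
        fix s assume sT: "s \<in> T"
        show "rho_lt T s \<beta>"
        proof (cases "s = []")
          case True
          show ?thesis unfolding True by (rule rho_lt.intros[OF x0]) (use ext0 in auto)
        next
          case False
          then have "rho_lt T s (snd (\<sigma> []))" using ext0 sT by auto
          then show ?thesis using rho_mono less_imp_le[OF x0] by blast
        qed
      qed
    qed
  qed
qed


end
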